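(* Let $D$ be an integral domain with quotient field $K$, let $L/K$ be an algebraic field extension, and let $A$ be any subring of $L$ containing $D$. Then for any $\mathrm{reg}(A)$-factroid $F$ of any $A$-submodule $M$ of $L$ such that $D\subseteq F$, one has $A \subseteq F$. In particular, $A$ is the only factroid of $A$ containing $D$.
   Context: $\mathrm{reg}(A)=A\setminus\{0\}$ for the domain $A$. For $T\subseteq A$ and an $A$-module $M$, a $T$-factroid of $M$ is an additive subgroup $F$ of $M$ such that for all $x\in M$ and $t\in T$, $tx\in F$ implies $x\in F$. A factroid of $A$ is a $\mathrm{reg}(A)$-factroid of the $A$-module $A$. *)

theory Defs
  imports "HOL-Computational_Algebra.Polynomial"
begin

text \<open>The field L is modelled as the whole of a type of class field; all rings
and modules below are subsets of L with the operations of L.\<close>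

definition add_subgroup :: "'a::field set \<Rightarrow> bool" where
  "add_subgroup F \<longleftrightarrow> 0 \<in> F \<and> (\<forall>x\<in>F. \<forall>y\<in>F. x + y \<in> F) \<and> (\<forall>x\<in>F. - x \<in> F)"

definition subring :: "'a::field set \<Rightarrow> bool" where
  "subring S \<longleftrightarrow> add_subgroup S \<and> 1 \<in> S \<and> (\<forall>x\<in>S. \<forall>y\<in>S. x * y \<in> S)"

definition submodule :: "'a::field set \<Rightarrow> 'a set \<Rightarrow> bool" where
  "submodule A M \<longleftrightarrow> add_subgroup M \<and> (\<forall>a\<in>A. \<forall>x\<in>M. a * x \<in> M)"

definition reg :: "'a::field set \<Rightarrow> 'a set" where
  "reg A = A - {0}"

definition factroid_of :: "'a::field set \<Rightarrow> 'a set \<Rightarrow> 'a set \<Rightarrow> bool" where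
  "factroid_of T M F \<longleftrightarrow> add_subgroup F \<and> F \<subseteq> M \<and>
     (\<forall>x\<in>M. \<forall>t\<in>T. t * x \<in> F \<longrightarrow> x \<in> F)"

definition quotient_field :: "'a::field set \<Rightarrow> 'a set" where
  "quotient_field D = {a / b | a b. a \<in> D \<and> b \<in> D \<and> b \<noteq> 0}"

definition algebraic_over :: "'a::field set \<Rightarrow> 'a \<Rightarrow> bool" where
  "algebraic_over K x \<longleftrightarrow> (\<exists>p. p \<noteq> 0 \<and> (\<forall>i. coeff p i \<in> K) \<and> poly p x = 0)"

end

theory Submission
  imports Defs
begin

lemma clear_denoms:
  fixes D :: "'a::field set"
  assumes D_ring: "subring D"
  shows "(\<forall>i. coeff p i \<in> quotient_field D) \<Longrightarrow> \<exists>d\<in>D. d \<noteq> 0 \<and> (\<forall>i. d * coeff p i \<in> D)"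
proof (induction p)
  case (pCons c q)
  have mul: "\<forall>x\<in>D. \<forall>y\<in>D. x * y \<in> D" and one: "1 \<in> D" and zero: "0 \<in> D"
    using D_ring by (auto simp: subring_def add_subgroup_def)
  have "\<forall>i. coeff q i \<in> quotient_field D"
    using pCons.prems by (metis coeff_pCons_Suc)
  then obtain e where e: "e \<in> D" "e \<noteq> 0" "\<forall>i. e * coeff q i \<in> D" using pCons.IH by blast
  have "c \<in> quotient_field D" using pCons.prems by (metis coeff_pCons_0)
  then obtain u v where uv: "u \<in> D" "v \<in> D" "v \<noteq> 0" "c = u / v"
    unfolding quotient_field_def by blast
  have "\<forall>i. (v * e) * coeff (pCons c q) i \<in> D"
  proof
    fix i show "(v * e) * coeff (pCons c q) i \<in> D"
    proof (cases i)
      case 0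
      then have eq: "(v * e) * coeff (pCons c q) i = e * u" using uv by (simp add: field_simps)
      have "e * u \<in> D" using mul e uv by blast
      then show ?thesis by (simp only: eq)
    next
      case (Suc j)
      then have eq: "(v * e) * coeff (pCons c q) i = v * (e * coeff q j)" by (simp add: field_simps)
      have "v * (e * coeff q j) \<in> D" using mul e uv by blast
      then show ?thesis by (simp only: eq)
    qed
  qed
  moreover have "v * e \<in> D" using mul e uv by blast
  moreover have "v * e \<noteq> 0" using uv e by simp
  ultimately show ?case by blast
next
  case 0
  have "1 \<in> D" "0 \<in> D" using D_ring by (simp_all add: subring_def add_subgroup_def)
  show ?case
  proof (rule bexI[of _ 1])
    show "1 \<in> D" by fact
    show "(1::'a) \<noteq> 0 \<and> (\<forall>i. 1 * coeff 0 i \<in> D)" using \<open>0 \<in> D\<close> by simp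
  qed
qed

lemma horner_step:
  fixes A M F :: "'a::field set"
  assumes F: "factroid_of (reg A) M F" and AM: "A \<subseteq> M" and A_ring: "subring A"
    and DF: "D \<subseteq> F" and DA: "D \<subseteq> A" and a: "a \<in> A" "a \<noteq> 0"
  shows "q \<noteq> 0 \<Longrightarrow> (\<forall>i. coeff q i \<in> D) \<Longrightarrow> a * poly q a \<in> F \<Longrightarrow> a * lead_coeff q \<in> F"
proof (induction q)
  case (pCons c r)
  show ?case
  proof (cases "r = 0")
    case True
    then show ?thesis using pCons.prems by simp
  next
    case False
    have cD: "c \<in> D" using pCons.prems(2) by (metis coeff_pCons_0)
    have rD: "\<forall>i. coeff r i \<in> D" using pCons.prems(2) by (metis coeff_pCons_Suc)
    have polyA: "\<And>p. (\<forall>i. coeff p i \<in> D) \<Longrightarrow> poly p a \<in> A"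
    proof -
      fix p :: "'a poly"
      show "(\<forall>i. coeff p i \<in> D) \<Longrightarrow> poly p a \<in> A"
      proof (induction p)
        case 0 then show ?case using A_ring by (simp add: subring_def add_subgroup_def)
      next
        case (pCons c' p')
        have "c' \<in> A" using pCons.prems DA by (metis coeff_pCons_0 subsetD)
        moreover have "poly p' a \<in> A" using pCons by (metis coeff_pCons_Suc)
        ultimately show ?case using a A_ring by (simp add: subring_def add_subgroup_def)
      qed
    qed
    have xA: "c + a * poly r a \<in> A" using polyA[of "pCons c r"] pCons.prems(2) by simp
    have "a * (c + a * poly r a) \<in> F" using pCons.prems(3) by simp
    moreover have "a \<in> reg A" using a by (simp add: reg_def)
    ultimately have xF: "c + a * poly r a \<in> F" using F xA AM unfolding factroid_of_def by blast
    have addF: "\<forall>x\<in>F. \<forall>y\<in>F. x + y \<in> F" and negF: "\<forall>x\<in>F. - x \<in> F"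
      using F by (simp_all add: factroid_of_def add_subgroup_def)
    have "c \<in> F" using cD DF by blast
    then have "- c \<in> F" using negF by blast
    then have "- c + (c + a * poly r a) \<in> F" using xF addF by blast
    then have "a * poly r a \<in> F" by simp
    then have "a * lead_coeff r \<in> F" using pCons.IH False rD by blast
    then show ?thesis using False by simp
  qed
qed simp

theorem proposition4p13:
  fixes D A :: "'a::field set"
  assumes D_ring: "subring D"
    and L_alg: "\<forall>x::'a. algebraic_over (quotient_field D) x"
    and A_ring: "subring A"
    and DA: "D \<subseteq> A"
  shows "(\<forall>M F. submodule A M \<and> factroid_of (reg A) M F \<and> D \<subseteq> F \<longrightarrow> A \<subseteq> F)
       \<and> factroid_of (reg A) A A
       \<and> (\<forall>F. factroid_of (reg A) A F \<and> D \<subseteq> F \<longrightarrow> F = A)"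
proof -
  have part1: "A \<subseteq> F" if M: "submodule A M" and F: "factroid_of (reg A) M F" and DF: "D \<subseteq> F" for M F
  proof
    fix a assume aA: "a \<in> A"
    have "1 \<in> D" using D_ring by (simp add: subring_def)
    then have "1 \<in> M" using DF F by (auto simp: factroid_of_def)
    have AM: "A \<subseteq> M"
    proof
      fix x assume "x \<in> A"
      then have "x * 1 \<in> M" using M \<open>1 \<in> M\<close> unfolding submodule_def by blast
      then show "x \<in> M" by simp
    qed
    show "a \<in> F"
    proof (cases "a = 0")
      case True then show ?thesis using F by (simp add: factroid_of_def add_subgroup_def)
    next
      case False
      obtain p where p: "p \<noteq> 0" "\<forall>i. coeff p i \<in> quotient_field D" "poly p a = 0"
        using L_alg by (auto simp: algebraic_over_def)
      obtain d where d: "d \<in> D" "d \<noteq> 0" "\<forall>i. d * coeff p i \<in> D"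
        using clear_denoms[OF D_ring p(2)] by blast
      define p' where "p' = smult d p"
      have p': "p' \<noteq> 0" "\<forall>i. coeff p' i \<in> D" "poly p' a = 0"
        using p d by (auto simp: p'_def)
      obtain c q where cq: "p' = pCons c q" by (rule pCons_cases)
      have cD: "c \<in> D" using p'(2) cq by (metis coeff_pCons_0)
      have qD: "\<forall>i. coeff q i \<in> D" using p'(2) cq by (metis coeff_pCons_Suc)
      have q0: "q \<noteq> 0"
      proof
        assume "q = 0"
        then have "c = 0" using p'(3) cq by simp
        then show False using p'(1) cq \<open>q = 0\<close> by simp
      qed
      have "c + a * poly q a = 0" using p'(3) cq by simp
      then have "a * poly q a = - c" by (simp add: eq_neg_iff_add_eq_0 add.commute)
      have negF: "\<forall>x\<in>F. - x \<in> F"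
        using F by (simp add: factroid_of_def add_subgroup_def)
      have "c \<in> F" using cD DF by blast
      then have "- c \<in> F" using negF by blast
      moreover note \<open>a * poly q a = - c\<close>
      ultimately have "a * poly q a \<in> F" by simp
      then have "a * lead_coeff q \<in> F"
        using horner_step[OF F AM A_ring DF DA aA False q0 qD] by blast
      then have "lead_coeff q * a \<in> F" by (simp add: mult.commute)
      moreover have "lead_coeff q \<in> reg A"
      proof -
        have "lead_coeff q \<in> D" using qD by blast
        moreover have "lead_coeff q \<noteq> 0" using q0 by simp
        ultimately show ?thesis using DA unfolding reg_def by blast
      qed
      ultimately show ?thesis using F aA AM unfolding factroid_of_def by blast
    qed
  qed
  have part2: "factroid_of (reg A) A A" using A_ring by (simp add: factroid_of_def subring_def)
  have subA: "submodule A A" using A_ring by (simp add: submodule_def subring_def)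
  show ?thesis
  proof (intro conjI allI impI)
    fix M F assume "submodule A M \<and> factroid_of (reg A) M F \<and> D \<subseteq> F"
    then show "A \<subseteq> F" using part1 by blast
  next
    show "factroid_of (reg A) A A" by (rule part2)
  next
    fix F assume H: "factroid_of (reg A) A F \<and> D \<subseteq> F"
    then have "A \<subseteq> F" using part1 subA by blast
    moreover have "F \<subseteq> A" using H by (simp add: factroid_of_def)
    ultimately show "F = A" by blast
  qed
qed

end
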